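(* Let $a\in\mathbf F^{\uparrow}$ with $\mathrm{supp}(a)=(0,r)$, let $\alpha_0\in(0,r)\cap A$, $\alpha_k=(\alpha_0)a^k$ ($k\in\mathbb Z$), and $b\in\mathbf F^{\uparrow}$ with $\mathrm{supp}(b)=(\alpha_0,\alpha_1)$. Let $G$ be a subgroup of $\mathbf V(r,\mathbb R^*_+,\mathbb R)$ with $G\cap\mathbf F(r,\mathbb R^*_+,\mathbb R)=\mathbf F$. Then $C_G(a)=C_{\mathbf F}(a)$ and $C_G(\{a^{-k}ba^k\mid k\in\mathbb Z\})=C_{\mathbf F}(\{a^{-k}ba^k\mid k\in\mathbb Z\})$.
   Context: Maps act on the right. Fix real $r>0$, a subgroup $\Lambda\neq\{1\}$ of $\mathbb R^*_+$, and an additive subgroup $A\subseteq\mathbb R$ with $r\in A$ and $\lambda A\subseteq A$ for $\lambda\in\Lambda$ (definitions also used with $\Lambda=\mathbb R^*_+$, $A=\mathbb R$). $\mathbf V(r,\Lambda,A)$ is the group of bijections $x\colon[0,r)\to[0,r)$ that are piecewise affine with finitely many breakpoints and discontinuities, right-continuous everywhere, with all slopes in $\Lambda$ and all breakpoints, discontinuity points and their images in $A$; $\mathbf F(r,\Lambda,A)$ is the subgroup of elements continuous for the usual topology; $\mathbf F=\mathbf F(r,\Lambda,A)$. $\mathbf F^{\uparrow}=\{x\in\mathbf F\mid(\gamma)x\ge\gamma\ \forall\gamma\}$; $\mathrm{supp}(x)$ is the set of non-fixed points; $C_G(S)$ is the centralizer of $S$ in $G$. *)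

theory Defs
  imports "HOL-Analysis.Analysis" "HOL-Algebra.Group"
begin

text \<open>Elements of V(r,Lambda,A) are represented as functions real => real that
  restrict to bijections of [0,r) and are the identity outside [0,r).
  Maps act on the right, so the group product x*y is "first x, then y",
  i.e. the function composition y o x.\<close>

definition std_params :: "real \<Rightarrow> real set \<Rightarrow> real set \<Rightarrow> bool" where
  "std_params r \<Lambda> A \<longleftrightarrow> r > 0
     \<and> \<Lambda> \<subseteq> {0<..} \<and> 1 \<in> \<Lambda> \<and> (\<forall>x\<in>\<Lambda>. \<forall>y\<in>\<Lambda>. x * y \<in> \<Lambda>)
     \<and> (\<forall>x\<in>\<Lambda>. inverse x \<in> \<Lambda>) \<and> \<Lambda> \<noteq> {1}
     \<and> 0 \<in> A \<and> (\<forall>x\<in>A. \<forall>y\<in>A. x + y \<in> A) \<and> (\<forall>x\<in>A. - x \<in> A)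
     \<and> r \<in> A \<and> (\<forall>l\<in>\<Lambda>. \<forall>x\<in>A. l * x \<in> A)"

text \<open>Piecewise affine with finitely many breakpoints/discontinuities, right-continuous,
  slopes in Lambda, breakpoints, discontinuity points and their images in A:
  there is a finite subdivision 0 = t_0 < ... < t_n = r of points of A such that x is
  affine with slope in Lambda on each [t_i, t_(i+1)) and x(t_i) is in A.\<close>
definition PL_map :: "real \<Rightarrow> real set \<Rightarrow> real set \<Rightarrow> (real \<Rightarrow> real) \<Rightarrow> bool" where
  "PL_map r \<Lambda> A x \<longleftrightarrow> (\<exists>ts :: real list.
      sorted_wrt (<) ts \<and> ts \<noteq> [] \<and> hd ts = 0 \<and> last ts = r \<and> set ts \<subseteq> A
      \<and> (\<forall>i. Suc i < length ts \<longrightarrow>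
             (\<exists>s\<in>\<Lambda>. \<exists>c. \<forall>t\<in>{ts ! i ..< ts ! Suc i}. x t = s * t + c))
      \<and> (\<forall>t\<in>set ts. t < r \<longrightarrow> x t \<in> A))"

definition V_set :: "real \<Rightarrow> real set \<Rightarrow> real set \<Rightarrow> (real \<Rightarrow> real) set" where
  "V_set r \<Lambda> A = {x. bij_betw x {0..<r} {0..<r} \<and> (\<forall>t. t \<notin> {0..<r} \<longrightarrow> x t = t)
                       \<and> PL_map r \<Lambda> A x}"

definition F_set :: "real \<Rightarrow> real set \<Rightarrow> real set \<Rightarrow> (real \<Rightarrow> real) set" where
  "F_set r \<Lambda> A = {x \<in> V_set r \<Lambda> A. continuous_on {0..<r} x}"

definition Vgrp :: "real \<Rightarrow> real set \<Rightarrow> real set \<Rightarrow> (real \<Rightarrow> real) monoid" where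
  "Vgrp r \<Lambda> A = \<lparr>carrier = V_set r \<Lambda> A, mult = (\<lambda>x y. y \<circ> x), one = id\<rparr>"

definition F_up :: "real \<Rightarrow> real set \<Rightarrow> real set \<Rightarrow> (real \<Rightarrow> real) set" where
  "F_up r \<Lambda> A = {x \<in> F_set r \<Lambda> A. \<forall>\<gamma>\<in>{0..<r}. x \<gamma> \<ge> \<gamma>}"

definition supp :: "real \<Rightarrow> (real \<Rightarrow> real) \<Rightarrow> real set" where
  "supp r x = {\<gamma> \<in> {0..<r}. x \<gamma> \<noteq> \<gamma>}"

text \<open>Centralizer of S in H (commuting is symmetric, so action side is irrelevant).\<close>
definition centr :: "(real \<Rightarrow> real) set \<Rightarrow> (real \<Rightarrow> real) set \<Rightarrow> (real \<Rightarrow> real) set" where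
  "centr H S = {g \<in> H. \<forall>s\<in>S. g \<circ> s = s \<circ> g}"

end

theory Submission
  imports Defs
begin


definition Hm :: "real \<Rightarrow> (real\<Rightarrow>real) \<Rightarrow> bool" where
 "Hm r c \<longleftrightarrow> 0 < r \<and> strict_mono_on {0..r} c \<and> c ` {0..<r} = {0..<r} \<and> (\<forall>t. t \<notin> {0..<r} \<longrightarrow> c t = t)"

lemma Hm_out: "Hm r c \<Longrightarrow> t \<notin> {0..<r} \<Longrightarrow> c t = t"
  by (simp add: Hm_def)

lemma Hm_r: "Hm r c \<Longrightarrow> c r = r"
  by (simp add: Hm_def)

lemma Hm_maps: "Hm r c \<Longrightarrow> x \<in> {0..<r} \<Longrightarrow> c x \<in> {0..<r}"
  unfolding Hm_def by blast

lemma Hm_mapsc: "Hm r c \<Longrightarrow> x \<in> {0..r} \<Longrightarrow> c x \<in> {0..r}"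
  using Hm_maps[of r c x] Hm_r[of r c] by (cases "x = r") auto

lemma Hm_less: "Hm r c \<Longrightarrow> x \<in> {0..r} \<Longrightarrow> y \<in> {0..r} \<Longrightarrow> c x < c y \<longleftrightarrow> x < y"
  unfolding Hm_def strict_mono_on_def
  by (metis linorder_neq_iff order_less_asym)

lemma Hm_le: "Hm r c \<Longrightarrow> x \<in> {0..r} \<Longrightarrow> y \<in> {0..r} \<Longrightarrow> c x \<le> c y \<longleftrightarrow> x \<le> y"
  using Hm_less[of r c y x] by (simp add: not_less[symmetric])

lemma Hm_eq: "Hm r c \<Longrightarrow> x \<in> {0..r} \<Longrightarrow> y \<in> {0..r} \<Longrightarrow> c x = c y \<longleftrightarrow> x = y"
  using Hm_le[of r c x y] Hm_le[of r c y x] by force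

lemma Hm_pos: "Hm r c \<Longrightarrow> 0 < r" by (simp add: Hm_def)

lemma Hm_0: assumes "Hm r c" shows "c 0 = 0"
proof -
  have "r > 0" using assms by (simp add: Hm_def)
  have "0 \<in> c ` {0..<r}" using assms unfolding Hm_def by auto
  then obtain w where w: "w \<in> {0..<r}" "c w = 0" by auto
  have c0: "c 0 \<in> {0..<r}" using Hm_maps[OF assms(1)] \<open>r>0\<close> by auto
  show ?thesis
  proof (cases "w = 0")
    case True then show ?thesis using w by simp
  next
    case False
    then have "c 0 < c w" using Hm_less[OF assms(1), of 0 w] w by auto
    then show ?thesis using w c0 by auto
  qed
qed

lemma Hm_id: "0 < r \<Longrightarrow> Hm r id"
  by (auto simp: Hm_def strict_mono_on_def)

lemma Hm_comp: assumes "Hm r f" "Hm r g" shows "Hm r (f \<circ> g)"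
  unfolding Hm_def
proof (intro conjI allI impI)
  show "strict_mono_on {0..r} (f \<circ> g)"
    unfolding strict_mono_on_def using Hm_mapsc[OF assms(2)] Hm_less[OF assms(1)] Hm_less[OF assms(2)]
    by simp
  show "0 < r" using assms by (simp add: Hm_def)
  show "(f \<circ> g) ` {0..<r} = {0..<r}" using assms unfolding Hm_def by (metis image_comp)
  fix t assume "t \<notin> {0..<r}" then show "(f \<circ> g) t = t" using assms by (simp add: Hm_def)
qed

lemma Hm_funpow: "Hm r f \<Longrightarrow> Hm r (f ^^ n)"
  by (induction n) (simp_all add: Hm_id Hm_comp Hm_pos)

lemma Hm_inv: assumes "Hm r f" "f \<circ> g = id" "g \<circ> f = id" shows "Hm r g"
proof -
  have fg: "f (g x) = x" for x using assms(2) by (metis comp_apply id_apply)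
  have gf: "g (f x) = x" for x using assms(3) by (metis comp_apply id_apply)
  have gmap: "g y \<in> {0..r}" if "y \<in> {0..r}" for y
  proof (cases "y = r")
    case True then show ?thesis using gf[of r] Hm_r[OF assms(1)] Hm_pos[OF assms(1)] by simp
  next
    case False
    then have "y \<in> f ` {0..<r}" using that assms(1) unfolding Hm_def by auto
    then show ?thesis using gf by auto
  qed
  show ?thesis unfolding Hm_def
  proof (intro conjI allI impI)
    show "0 < r" using Hm_pos[OF assms(1)] .
    show "strict_mono_on {0..r} g" unfolding strict_mono_on_def
      using Hm_less[OF assms(1)] gmap fg by metis
    show "g ` {0..<r} = {0..<r}"
    proof -
      have "g ` {0..<r} = g ` f ` {0..<r}" using assms(1) by (simp add: Hm_def)
      also have "\<dots> = {0..<r}" by (simp add: image_comp gf)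
      finally show ?thesis .
    qed
    fix t assume "t \<notin> {0..<r}"
    then show "g t = t" using Hm_out[OF assms(1)] gf by metis
  qed
qed

lemma Hm_left: assumes "Hm r c" "0 < q" "q \<le> r"
  shows "filterlim c (at_left (c q)) (at_left q)"
  unfolding filterlim_at
proof
  have ev: "eventually (\<lambda>x. x \<in> {0<..<q}) (at_left q)" using eventually_at_left_real assms by blast
  show "\<forall>\<^sub>F x in at_left q. c x \<in> {..<c q} \<and> c x \<noteq> c q"
    using ev
  proof eventually_elim
    case (elim x)
    then have "c x < c q" using Hm_less[OF assms(1), of x q] assms by auto
    then show ?case by auto
  qed
  show "(c \<longlongrightarrow> c q) (at_left q)"
  proof (rule order_tendstoI)
    fix z assume z: "z < c q"
    show "\<forall>\<^sub>F x in at_left q. z < c x"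
    proof (cases "z < c 0")
      case True
      show ?thesis using ev
      proof eventually_elim
        case (elim x)
        then have "c 0 < c x" using Hm_less[OF assms(1), of 0 x] assms by auto
        then show ?case using True by auto
      qed
    next
      case False
      have c0: "c 0 = 0" using Hm_0[OF assms(1)] by simp
      have "z \<in> {0..<r}" using False z c0 Hm_mapsc[OF assms(1), of q] assms by auto
      then have "z \<in> c ` {0..<r}" using assms(1) by (simp add: Hm_def)
      then obtain w where w: "w \<in> {0..<r}" "c w = z" by auto
      have wq: "w < q" using Hm_less[OF assms(1), of w q] w z assms by auto
      have "eventually (\<lambda>x. x \<in> {w<..<q}) (at_left q)" using eventually_at_left_real wq by blast
      then show ?thesis by eventually_elim (use Hm_less[OF assms(1)] assms w in auto)
    qed
  next
    fix z assume z: "z > c q"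
    show "\<forall>\<^sub>F x in at_left q. c x < z"
      using ev
    proof eventually_elim
      case (elim x)
      then have "c x < c q" using Hm_less[OF assms(1), of x q] assms by auto
      then show ?case using z by auto
    qed
  qed
qed




lemma cover_right:
  fixes ts :: "real list"
  assumes "sorted_wrt (<) ts" "ts \<noteq> []" "hd ts = 0" "last ts = r" "0 \<le> p" "p < r"
  shows "\<exists>i. Suc i < length ts \<and> ts!i \<le> p \<and> p < ts!Suc i"
proof -
  define I where "I = {i. i < length ts \<and> ts!i \<le> p}"
  have fin: "finite I" unfolding I_def by auto
  have "0 \<in> I" using assms unfolding I_def by (simp add: hd_conv_nth)
  then have ne: "I \<noteq> {}" by auto
  define i where "i = Max I"
  have iI: "i \<in> I" using Max_in[OF fin ne] i_def by simp
  have lastn: "ts ! (length ts - 1) = r" using assms by (simp add: last_conv_nth)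
  have "i \<noteq> length ts - 1" using iI lastn assms unfolding I_def by auto
  then have si: "Suc i < length ts" using iI unfolding I_def by auto
  have "Suc i \<notin> I" using Max_ge[OF fin, of "Suc i"] i_def by auto
  then show ?thesis using si iI unfolding I_def by auto
qed

lemma cover_left:
  fixes ts :: "real list"
  assumes "sorted_wrt (<) ts" "ts \<noteq> []" "hd ts = 0" "last ts = r" "0 < p" "p \<le> r"
  shows "\<exists>i. Suc i < length ts \<and> ts!i < p \<and> p \<le> ts!Suc i"
proof -
  define I where "I = {i. i < length ts \<and> ts!i < p}"
  have fin: "finite I" unfolding I_def by auto
  have "0 \<in> I" using assms unfolding I_def by (simp add: hd_conv_nth)
  then have ne: "I \<noteq> {}" by auto
  define i where "i = Max I"
  have iI: "i \<in> I" using Max_in[OF fin ne] i_def by simp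
  have lastn: "ts ! (length ts - 1) = r" using assms by (simp add: last_conv_nth)
  have "i \<noteq> length ts - 1" using iI lastn assms unfolding I_def by auto
  then have si: "Suc i < length ts" using iI unfolding I_def by auto
  have "Suc i \<notin> I" using Max_ge[OF fin, of "Suc i"] i_def by auto
  then show ?thesis using si iI unfolding I_def by auto
qed

lemma V_PL: "x \<in> V_set r {0<..} UNIV \<Longrightarrow> \<exists>ts. sorted_wrt (<) ts \<and> ts \<noteq> [] \<and> hd ts = 0 \<and> last ts = r
      \<and> (\<forall>i. Suc i < length ts \<longrightarrow>
             (\<exists>s>0. \<exists>c. \<forall>t\<in>{ts ! i ..< ts ! Suc i}. x t = s * t + c))"
proof -
  assume "x \<in> V_set r {0<..} UNIV"
  then obtain ts where "sorted_wrt (<) ts \<and> ts \<noteq> [] \<and> hd ts = 0 \<and> last ts = r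
      \<and> (\<forall>i. Suc i < length ts \<longrightarrow>
             (\<exists>s\<in>{0<..}. \<exists>c. \<forall>t\<in>{ts ! i ..< ts ! Suc i}. x t = s * t + c))"
    unfolding V_set_def PL_map_def by blast
  then show ?thesis by (intro exI[of _ ts]) fastforce
qed

lemma V_right: assumes "x \<in> V_set r {0<..} UNIV" "0 \<le> p" "p < r"
  shows "\<exists>e>0. \<exists>s>0. \<exists>c. \<forall>y\<in>{p..<p+e}. x y = s*y+c"
proof -
  obtain ts where ts: "sorted_wrt (<) ts" "ts \<noteq> []" "hd ts = 0" "last ts = r"
      "\<forall>i. Suc i < length ts \<longrightarrow> (\<exists>s>0. \<exists>c. \<forall>t\<in>{ts ! i ..< ts ! Suc i}. x t = s * t + c)"
    using V_PL[OF assms(1)] by blast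
  obtain i where i: "Suc i < length ts" "ts!i \<le> p" "p < ts!Suc i" using cover_right[OF ts(1-4) assms(2,3)] by blast
  obtain s c where sc: "s > 0" "\<forall>t\<in>{ts ! i ..< ts ! Suc i}. x t = s * t + c" using ts(5) i(1) by blast
  show ?thesis
    by (rule exI[of _ "ts!Suc i - p"]) (use i sc in auto)
qed

lemma V_left: assumes "x \<in> V_set r {0<..} UNIV" "0 < p" "p \<le> r"
  shows "\<exists>e>0. \<exists>s>0. \<exists>c. \<forall>y\<in>{p-e<..<p}. x y = s*y+c"
proof -
  obtain ts where ts: "sorted_wrt (<) ts" "ts \<noteq> []" "hd ts = 0" "last ts = r"
      "\<forall>i. Suc i < length ts \<longrightarrow> (\<exists>s>0. \<exists>c. \<forall>t\<in>{ts ! i ..< ts ! Suc i}. x t = s * t + c)"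
    using V_PL[OF assms(1)] by blast
  obtain i where i: "Suc i < length ts" "ts!i < p" "p \<le> ts!Suc i" using cover_left[OF ts(1-4) assms(2,3)] by blast
  obtain s c where sc: "s > 0" "\<forall>t\<in>{ts ! i ..< ts ! Suc i}. x t = s * t + c" using ts(5) i(1) by blast
  show ?thesis
    by (rule exI[of _ "p - ts!i"]) (use i sc in auto)
qed

lemma V_inner: assumes "x \<in> V_set r {0<..} UNIV" "0 < p" "p < r"
  shows "\<exists>T. finite T \<and> (\<forall>p\<in>{0<..<r}-T. \<exists>e>0. \<exists>s c. \<forall>y\<in>{p-e<..<p+e}. x y = s*y+c)"
proof -
  obtain ts where ts: "sorted_wrt (<) ts" "ts \<noteq> []" "hd ts = 0" "last ts = r"
      "\<forall>i. Suc i < length ts \<longrightarrow> (\<exists>s>0. \<exists>c. \<forall>t\<in>{ts ! i ..< ts ! Suc i}. x t = s * t + c)"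
    using V_PL[OF assms(1)] by blast
  show ?thesis
  proof (rule exI[of _ "set ts"], safe)
    fix p assume p: "p \<in> {0<..<r}" "p \<notin> set ts"
    have p0: "0 \<le> p" "p < r" using p by auto
    obtain i where i: "Suc i < length ts" "ts!i \<le> p" "p < ts!Suc i" using cover_right[OF ts(1-4) p0] by blast
    have "ts!i \<noteq> p" using p(2) i(1) by auto
    then have ip: "ts!i < p" using i by auto
    obtain s c where sc: "s > 0" "\<forall>t\<in>{ts ! i ..< ts ! Suc i}. x t = s * t + c" using ts(5) i(1) by blast
    define e where "e = min (p - ts!i) (ts!Suc i - p)"
    have e0: "e > 0" using i ip unfolding e_def by auto
    have "\<forall>y\<in>{p-e<..<p+e}. x y = s*y+c"
    proof
      fix y assume "y \<in> {p-e<..<p+e}"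
      then have "y \<in> {ts!i..<ts!Suc i}" unfolding e_def by (auto simp: min_def split: if_split_asm)
      then show "x y = s*y+c" using sc by auto
    qed
    then show "\<exists>e>0. \<exists>s c. \<forall>y\<in>{p-e<..<p+e}. x y = s*y+c" using e0 by blast
  qed
qed

definition lgap :: "(real \<Rightarrow> real) \<Rightarrow> real \<Rightarrow> bool" where
  "lgap x p \<longleftrightarrow> \<not> (x \<longlongrightarrow> x p) (at_left p)"

lemma V_leftlim: assumes "x \<in> V_set r {0<..} UNIV" "0 < p" "p \<le> r"
  shows "\<exists>L. filterlim x (at_left L) (at_left p)"
proof -
  obtain e s c where esc: "e > 0" "s > 0" "\<forall>y\<in>{p-e<..<p}. x y = s*y+c" using V_left[OF assms] by blast
  have ev: "eventually (\<lambda>y. y \<in> {p-e<..<p}) (at_left p)" using eventually_at_left_real esc by simp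
  show ?thesis
  proof (rule exI[of _ "s*p+c"], unfold filterlim_at, intro conjI)
    show "\<forall>\<^sub>F y in at_left p. x y \<in> {..<s * p + c} \<and> x y \<noteq> s * p + c"
      using ev by eventually_elim (use esc in auto)
    have "((\<lambda>y. s*y+c) \<longlongrightarrow> s*p+c) (at_left p)" by (intro tendsto_intros)
    moreover have "\<forall>\<^sub>F y in at_left p. s*y+c = x y" using ev by eventually_elim (use esc in auto)
    ultimately show "(x \<longlongrightarrow> s * p + c) (at_left p)" by (rule Lim_transform_eventually)
  qed
qed

lemma V_lgap_fin: assumes "x \<in> V_set r {0<..} UNIV"
  shows "finite {p\<in>{0<..<r}. lgap x p}"
proof (cases "r > 0")
  case False then show ?thesis by auto
next
  case True
  obtain T where T: "finite T" "\<forall>p\<in>{0<..<r}-T. \<exists>e>0. \<exists>s c. \<forall>y\<in>{p-e<..<p+e}. x y = s*y+c"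
    using V_inner[OF assms, of "r/2"] True by auto
  have "{p\<in>{0<..<r}. lgap x p} \<subseteq> T"
  proof
    fix p assume p: "p \<in> {p\<in>{0<..<r}. lgap x p}"
    show "p \<in> T"
    proof (rule ccontr)
      assume "p \<notin> T"
      then have "p \<in> {0<..<r} - T" using p by simp
      then have "\<exists>e>0. \<exists>s c. \<forall>y\<in>{p-e<..<p+e}. x y = s*y+c" by (rule bspec[OF T(2)])
      then obtain e s c where esc: "e > 0" "\<forall>y\<in>{p-e<..<p+e}. x y = s*y+c" by blast
      have ev: "eventually (\<lambda>y. y \<in> {p-e<..<p}) (at_left p)" using eventually_at_left_real esc by simp
      have "((\<lambda>y. s*y+c) \<longlongrightarrow> s*p+c) (at_left p)" by (intro tendsto_intros)
      moreover have "\<forall>\<^sub>F y in at_left p. s*y+c = x y" using ev by eventually_elim (use esc in auto)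
      ultimately have "(x \<longlongrightarrow> s*p+c) (at_left p)" by (rule Lim_transform_eventually)
      moreover have "x p = s*p+c" using esc by auto
      ultimately have "(x \<longlongrightarrow> x p) (at_left p)" by simp
      then show False using p unfolding lgap_def by auto
    qed
  qed
  then show ?thesis using T(1) finite_subset by blast
qed

lemma V_cont: assumes "x \<in> V_set r {0<..} UNIV" "\<forall>p\<in>{0<..<r}. \<not> lgap x p"
  shows "continuous_on {0..<r} x"
  unfolding continuous_on_eq_continuous_within
proof
  fix p assume p: "p \<in> {0..<r}"
  have p0: "0 \<le> p" "p < r" using p by auto
  obtain e s c where esc: "e > 0" "s > 0" "\<forall>y\<in>{p..<p+e}. x y = s*y+c" using V_right[OF assms(1) p0] by blast
  have ev: "eventually (\<lambda>y. y \<in> {p<..<p+e}) (at_right p)" using eventually_at_right_real esc by simp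
  have "((\<lambda>y. s*y+c) \<longlongrightarrow> s*p+c) (at_right p)" by (intro tendsto_intros)
  moreover have "\<forall>\<^sub>F y in at_right p. s*y+c = x y" using ev by eventually_elim (use esc in auto)
  ultimately have "(x \<longlongrightarrow> s*p+c) (at_right p)" by (rule Lim_transform_eventually)
  moreover have "x p = s*p+c" using esc by auto
  ultimately have R: "(x \<longlongrightarrow> x p) (at_right p)" by simp
  show "continuous (at p within {0..<r}) x"
    unfolding continuous_within
  proof (cases "p = 0")
    case True
    have "at p within {0..<r} \<le> at_right p"
      unfolding at_within_def by (intro inf_mono order_refl) (auto simp: True)
    then show "(x \<longlongrightarrow> x p) (at p within {0..<r})" using R by (rule tendsto_mono)
  next
    case False
    then have "(x \<longlongrightarrow> x p) (at_left p)" using assms(2) p unfolding lgap_def by auto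
    then have "(x \<longlongrightarrow> x p) (at p)" using R by (rule filterlim_split_at)
    then show "(x \<longlongrightarrow> x p) (at p within {0..<r})" by (rule tendsto_mono[OF at_le[OF subset_UNIV]])
  qed
qed




lemma V_bij: "g \<in> V_set r L A \<Longrightarrow> bij_betw g {0..<r} {0..<r}"
  by (simp add: V_set_def)

lemma V_out: "g \<in> V_set r L A \<Longrightarrow> t \<notin> {0..<r} \<Longrightarrow> g t = t"
  by (simp add: V_set_def)

lemma V_maps: "g \<in> V_set r L A \<Longrightarrow> x \<in> {0..<r} \<Longrightarrow> g x \<in> {0..<r}"
  using V_bij bij_betwE by blast

lemma V_inj: "g \<in> V_set r L A \<Longrightarrow> x \<in> {0..<r} \<Longrightarrow> y \<in> {0..<r} \<Longrightarrow> g x = g y \<longleftrightarrow> x = y"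
  using V_bij bij_betw_imp_inj_on inj_on_eq_iff by metis

lemma comm_apply: "g \<circ> c = c \<circ> g \<Longrightarrow> g (c x) = c (g x)"
  by (metis comp_apply)

lemma prop_gap:
  assumes g: "g \<in> V_set r {0<..} UNIV" and c: "Hm r c" and comm: "g \<circ> c = c \<circ> g"
    and p: "0 < p" "p < r" and gap: "lgap g p"
  shows "lgap g (c p)"
proof -
  obtain L where L: "filterlim g (at_left L) (at_left p)" using V_leftlim[OF g p(1)] p by auto
  have Lt: "(g \<longlongrightarrow> L) (at_left p)" using L unfolding filterlim_at by simp
  have Lne: "L \<noteq> g p" using gap Lt unfolding lgap_def by auto
  have ev: "eventually (\<lambda>y. y \<in> {0<..<p}) (at_left p)" using eventually_at_left_real p by blast
  have ev2: "eventually (\<lambda>y. 0 \<le> g y \<and> g y < r \<and> g y < L) (at_left p)"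
    using eventually_conj[OF ev L[unfolded filterlim_at, THEN conjunct1]]
  proof (rule eventually_mono)
    fix y assume "y \<in> {0<..<p} \<and> g y \<in> {..<L} \<and> g y \<noteq> L"
    then show "0 \<le> g y \<and> g y < r \<and> g y < L" using V_maps[OF g, of y] p by auto
  qed
  have Lr: "L \<le> r"
    by (rule tendsto_upperbound[OF Lt]) (use ev2 in \<open>auto elim: eventually_mono\<close>)
  obtain y0 where "0 \<le> g y0 \<and> g y0 < r \<and> g y0 < L" using eventually_happens[OF ev2] by auto
  then have L0: "0 < L" by auto
  have cp: "c p \<in> {0<..<r}"
  proof -
    have "c p \<in> {0..<r}" using Hm_maps[OF c] p by auto
    moreover have "c p \<noteq> c 0" using Hm_eq[OF c, of p 0] p by auto
    ultimately show ?thesis using Hm_0[OF c] by auto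
  qed
  obtain L' where L': "filterlim g (at_left L') (at_left (c p))" using V_leftlim[OF g, of "c p"] cp by auto
  have T1: "filterlim (\<lambda>y. g (c y)) (at_left L') (at_left p)"
    by (rule filterlim_compose[OF L' Hm_left[OF c p(1)]]) (use p in simp)
  have T2: "filterlim (\<lambda>y. c (g y)) (at_left (c L)) (at_left p)"
    by (rule filterlim_compose[OF Hm_left[OF c L0 Lr] L])
  have T1': "((\<lambda>y. c (g y)) \<longlongrightarrow> L') (at_left p)" using T1 unfolding filterlim_at comm_apply[OF comm] by simp
  have T2': "((\<lambda>y. c (g y)) \<longlongrightarrow> c L) (at_left p)" using T2 unfolding filterlim_at by simp
  have LL: "L' = c L" using tendsto_unique[OF _ T1' T2'] by simp
  have gp: "g p \<in> {0..<r}" using V_maps[OF g] p by auto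
  have "c L \<noteq> c (g p)" using Hm_eq[OF c, of L "g p"] Lne L0 Lr gp by auto
  then have ne: "L' \<noteq> g (c p)" using LL comm_apply[OF comm] by simp
  have "(g \<longlongrightarrow> L') (at_left (c p))" using L' unfolding filterlim_at by simp
  then show ?thesis unfolding lgap_def using ne tendsto_unique[of "at_left (c p)" g L' "g (c p)"] by auto
qed

lemma caseA:
  assumes g: "g \<in> V_set r {0<..} UNIV" and c: "Hm r c" and comm: "g \<circ> c = c \<circ> g"
    and up: "\<forall>x\<in>{0<..<r}. c x \<noteq> x \<longrightarrow> c x > x"
    and p: "0 < p" "p < r" "c p \<noteq> p"
  shows "\<not> lgap g p"
proof
  assume gap: "lgap g p"
  define q where "q n = (c ^^ n) p" for n
  have inv: "q n \<in> {0<..<r} \<and> c (q n) \<noteq> q n \<and> lgap g (q n)" for n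
  proof (induction n)
    case 0 then show ?case using p gap by (simp add: q_def)
  next
    case (Suc n)
    have qs: "q (Suc n) = c (q n)" by (simp add: q_def)
    have a1: "c (q n) \<in> {0<..<r}"
    proof -
      have "c (q n) \<in> {0..<r}" using Hm_maps[OF c] Suc by auto
      moreover have "c (q n) \<noteq> c 0" using Hm_eq[OF c, of "q n" 0] Suc by auto
      ultimately show ?thesis using Hm_0[OF c] by auto
    qed
    have a2: "c (c (q n)) \<noteq> c (q n)" using Hm_eq[OF c, of "c (q n)" "q n"] Suc a1 by auto
    have a3: "lgap g (c (q n))" using prop_gap[OF g c comm, of "q n"] Suc by auto
    show ?case using a1 a2 a3 qs by simp
  qed
  have "q n < q (Suc n)" for n
    using up inv[of n] by (simp add: q_def)
  then have sm: "strict_mono q" by (simp add: strict_mono_Suc_iff)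
  then have "inj q" by (simp add: strict_mono_on_imp_inj_on)
  then have "infinite (range q)" by (rule range_inj_infinite)
  moreover have "range q \<subseteq> {p\<in>{0<..<r}. lgap g p}" using inv by auto
  ultimately show False using V_lgap_fin[OF g] finite_subset by blast
qed




lemma F_Hm: assumes x: "x \<in> F_set r L A'" and x0: "x 0 = 0" and r: "0 < r"
  shows "Hm r x"
proof -
  have xV: "x \<in> V_set r L A'" and cont: "continuous_on {0..<r} x" using x by (auto simp: F_set_def)
  have bij: "bij_betw x {0..<r} {0..<r}" using V_bij[OF xV] .
  have inj: "inj_on x {0..<r}" using bij bij_betw_imp_inj_on by blast
  have sm: "x u < x v" if uv: "0 \<le> u" "u < v" "v \<le> r" for u v
  proof (cases "v = r")
    case True
    then have "x v = r" using V_out[OF xV, of r] by simp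
    moreover have "x u \<in> {0..<r}" using V_maps[OF xV, of u] uv True by auto
    ultimately show ?thesis by auto
  next
    case False
    then have vr: "v < r" using uv by auto
    have xv: "x v \<in> {0..<r}" using V_maps[OF xV, of v] uv vr by auto
    show ?thesis
    proof (cases "u = 0")
      case True
      have "x v \<noteq> x 0" using V_inj[OF xV, of v 0] uv vr True by auto
      then show ?thesis using True x0 xv by auto
    next
      case False
      then have u0: "0 < u" using uv by auto
      have "(x 0 < x u \<and> x u < x v) \<or> (x v < x u \<and> x u < x 0)"
        by (rule continuous_inj_imp_mono[OF u0 uv(2)])
           (use vr in \<open>auto intro: continuous_on_subset[OF cont] inj_on_subset[OF inj]\<close>)
      moreover have "x u \<in> {0..<r}" using V_maps[OF xV, of u] uv vr by auto
      ultimately show ?thesis using x0 by auto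
    qed
  qed
  show ?thesis unfolding Hm_def
  proof (intro conjI allI impI)
    show "0 < r" by fact
    show "strict_mono_on {0..r} x" unfolding strict_mono_on_def using sm by auto
    show "x ` {0..<r} = {0..<r}" using bij by (simp add: bij_betw_def)
    show "x t = t" if "t \<notin> {0..<r}" for t using V_out[OF xV that] .
  qed
qed

lemma params_r: "std_params r \<Lambda> A \<Longrightarrow> 0 < r" by (simp add: std_params_def)

lemma Vgrp_carrier: "carrier (Vgrp r L A) = V_set r L A" by (simp add: Vgrp_def)

lemma centr_a:
  assumes params: "std_params r \<Lambda> A"
    and a: "a \<in> F_up r \<Lambda> A" "supp r a = {0<..<r}"
    and G: "subgroup G (Vgrp r {0<..} UNIV)"
       "G \<inter> F_set r {0<..} UNIV = F_set r \<Lambda> A"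
  shows "centr G {a} = centr (F_set r \<Lambda> A) {a}"
proof -
  have r: "0 < r" using params_r[OF params] .
  have FG: "F_set r \<Lambda> A \<subseteq> G" using G(2) by blast
  have GV: "G \<subseteq> V_set r {0<..} UNIV" using subgroup.subset[OF G(1)] by (simp add: Vgrp_carrier)
  have aF: "a \<in> F_set r \<Lambda> A" and age: "\<forall>y\<in>{0..<r}. a y \<ge> y" using a(1) by (auto simp: F_up_def)
  have "0 \<notin> supp r a" using a(2) by simp
  then have a0: "a 0 = 0" using r unfolding supp_def by simp
  have aH: "Hm r a" using F_Hm[OF aF a0 r] .
  have aup: "\<forall>x\<in>{0<..<r}. a x \<noteq> x"
  proof
    fix x assume "x \<in> {0<..<r}"
    then have "x \<in> supp r a" using a(2) by simp
    then show "a x \<noteq> x" unfolding supp_def by simp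
  qed
  show ?thesis
  proof
    show "centr (F_set r \<Lambda> A) {a} \<subseteq> centr G {a}" using FG unfolding centr_def by auto
    show "centr G {a} \<subseteq> centr (F_set r \<Lambda> A) {a}"
    proof
      fix g assume g: "g \<in> centr G {a}"
      then have gG: "g \<in> G" and comm: "g \<circ> a = a \<circ> g" unfolding centr_def by auto
      have gV: "g \<in> V_set r {0<..} UNIV" using gG GV by auto
      have "\<forall>p\<in>{0<..<r}. \<not> lgap g p"
      proof
        fix p assume p: "p \<in> {0<..<r}"
        show "\<not> lgap g p"
          by (rule caseA[OF gV aH comm]) (use p aup age in \<open>auto simp: less_le\<close>)
      qed
      then have "continuous_on {0..<r} g" using V_cont[OF gV] by simp
      then have "g \<in> F_set r {0<..} UNIV" using gV by (simp add: F_set_def)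
      then have "g \<in> F_set r \<Lambda> A" using G(2) gG by blast
      then show "g \<in> centr (F_set r \<Lambda> A) {a}" using comm unfolding centr_def by auto
    qed
  qed
qed




lemma alpha_mono:
  fixes \<alpha> :: "int \<Rightarrow> real"
  assumes "\<forall>j. \<alpha> j < \<alpha> (j+1)" "i < j"
  shows "\<alpha> i < \<alpha> j"
proof -
  have "\<alpha> i < \<alpha> (i + int d + 1)" for d
  proof (induction d)
    case 0 then show ?case using assms(1) by simp
  next
    case (Suc d)
    have h: "\<alpha> (i + int d + 1) < \<alpha> (i + int d + 1 + 1)" using assms(1) by blast
    have eq: "i + int (Suc d) + 1 = i + int d + 1 + 1" by simp
    show ?case unfolding eq using Suc h by linarith
  qed
  from this[of "nat (j - i - 1)"] show ?thesis using assms(2) by simp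
qed

lemma cover_alpha:
  fixes \<alpha> :: "int \<Rightarrow> real" and a :: "real \<Rightarrow> real"
  assumes cont: "continuous_on {0..<r} a"
    and up: "\<forall>x\<in>{0<..<r}. a x > x"
    and al: "\<forall>j. \<alpha> j \<in> {0<..<r}" "\<forall>j. \<alpha> (j+1) = a (\<alpha> j)"
    and p: "0 < p" "p < r"
  shows "\<exists>k. \<alpha> k \<le> p \<and> p < \<alpha> (k+1)"
proof -
  have inc: "\<forall>j. \<alpha> j < \<alpha> (j+1)" using up al by auto
  have fix_contra: False if L: "L \<in> {0<..<r}" and X: "X \<longlonglongrightarrow> L"
    and XS: "(\<forall>n. X (Suc n) = a (X n)) \<or> (\<forall>n. X n = a (X (Suc n)))"
    and Xr: "\<forall>n. X n \<in> {0<..<r}" for X L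
  proof -
    have aX: "(\<lambda>n. a (X n)) \<longlonglongrightarrow> a L"
      by (rule continuous_on_tendsto_compose[OF cont X]) (use L Xr in \<open>auto intro!: always_eventually simp: less_imp_le\<close>)
    have aXs: "(\<lambda>n. a (X (Suc n))) \<longlonglongrightarrow> a L" using LIMSEQ_Suc[OF aX] .
    have Xs: "(\<lambda>n. X (Suc n)) \<longlonglongrightarrow> L" using LIMSEQ_Suc[OF X] .
    have "a L = L"
    proof (cases "\<forall>n. X (Suc n) = a (X n)")
      case True
      then have "(\<lambda>n. a (X n)) \<longlonglongrightarrow> L" using Xs by simp
      then show ?thesis using aX LIMSEQ_unique by blast
    next
      case False
      then have "\<forall>n. X n = a (X (Suc n))" using XS by blast
      then have e: "(\<lambda>n. a (X (Suc n))) = X" by (intro ext) metis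
      have "(\<lambda>n. a (X (Suc n))) \<longlonglongrightarrow> L" unfolding e by (rule X)
      then show ?thesis using aXs LIMSEQ_unique by blast
    qed
    then show False using bspec[OF up L] by simp
  qed
  have n: "\<exists>n::nat. p < \<alpha> (int n)"
  proof (rule ccontr)
    assume "\<not> ?thesis"
    then have le: "\<forall>n. \<alpha> (int n) \<le> p" by (simp add: not_less)
    define X where "X n = \<alpha> (int n)" for n
    have incX: "incseq X" unfolding X_def
    proof (rule incseq_SucI)
      fix n
      have "\<alpha> (int n) < \<alpha> (int n + 1)" using inc by blast
      then show "\<alpha> (int n) \<le> \<alpha> (int (Suc n))" by (simp add: add.commute)
    qed
    have bdd: "bdd_above (range X)" using le unfolding X_def by (auto intro!: bdd_aboveI)
    have lim: "X \<longlonglongrightarrow> (SUP i. X i)" by (rule LIMSEQ_incseq_SUP[OF bdd incX])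
    have "(SUP i. X i) \<le> p" using le unfolding X_def by (intro cSUP_least) auto
    moreover have "X 0 \<le> (SUP i. X i)" by (rule cSUP_upper[OF _ bdd]) simp
    moreover have "X 0 > 0" using al unfolding X_def by auto
    ultimately have "(SUP i. X i) \<in> {0<..<r}" using p by auto
    moreover have "\<forall>n. X (Suc n) = a (X n)" using al(2) unfolding X_def by (metis of_nat_Suc add.commute)
    ultimately show False using fix_contra[OF _ lim] al unfolding X_def by auto
  qed
  have m: "\<exists>m::nat. \<alpha> (- int m) \<le> p"
  proof (rule ccontr)
    assume "\<not> ?thesis"
    then have ge: "\<forall>m. p < \<alpha> (- int m)" by (simp add: not_le)
    define X where "X m = \<alpha> (- int m)" for m
    have XS: "\<forall>m. X m = a (X (Suc m))"
    proof
      fix m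
      have "- int m = - int (Suc m) + 1" by simp
      then show "X m = a (X (Suc m))" unfolding X_def using al(2) by metis
    qed
    have decX: "decseq X"
    proof (rule decseq_SucI)
      fix m show "X (Suc m) \<le> X m" using XS up al unfolding X_def by (metis less_imp_le)
    qed
    have bdd: "bdd_below (range X)" using ge unfolding X_def by (auto intro!: bdd_belowI less_imp_le)
    have lim: "X \<longlonglongrightarrow> (INF i. X i)" by (rule LIMSEQ_decseq_INF[OF bdd decX])
    have "p \<le> (INF i. X i)" using ge unfolding X_def by (intro cINF_greatest) (auto intro: less_imp_le)
    moreover have "(INF i. X i) \<le> X 0" by (rule cINF_lower[OF bdd]) simp
    moreover have "X 0 < r" using al unfolding X_def by auto
    ultimately have "(INF i. X i) \<in> {0<..<r}" using p by auto
    moreover have "\<forall>n. X n \<in> {0<..<r}" using al unfolding X_def by blast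
    ultimately show False using fix_contra[OF _ lim] XS by blast
  qed
  obtain n :: nat where hn: "p < \<alpha> (int n)" using n by blast
  obtain m :: nat where hm: "\<alpha> (- int m) \<le> p" using m by blast
  define K where "K = {j \<in> {- int m..int n}. \<alpha> j \<le> p}"
  have fin: "finite K" unfolding K_def by (rule finite_subset[of _ "{- int m..int n}"]) auto
  have ne: "K \<noteq> {}" using hm hn alpha_mono[OF inc, of "int n" "- int m"] unfolding K_def
    by (intro notI) (auto simp: set_eq_iff)
  define k where "k = Max K"
  have kK: "k \<in> K" using Max_in[OF fin ne] k_def by simp
  have "k \<noteq> int n" using kK hn unfolding K_def by auto
  then have "k + 1 \<in> {- int m..int n}" using kK unfolding K_def by auto
  moreover have "k + 1 \<notin> K" using Max_ge[OF fin, of "k+1"] k_def by auto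
  ultimately have "p < \<alpha> (k+1)" unfolding K_def by auto
  then show ?thesis using kK unfolding K_def by auto
qed

lemma g_supp:
  assumes g: "g \<in> V_set r {0<..} UNIV" and c: "Hm r c" and comm: "g \<circ> c = c \<circ> g"
    and x: "x \<in> {0..<r}" "c x \<noteq> x"
  shows "g x \<in> {0..<r} \<and> c (g x) \<noteq> g x"
proof -
  have gx: "g x \<in> {0..<r}" using V_maps[OF g x(1)] .
  have cx: "c x \<in> {0..<r}" using Hm_maps[OF c x(1)] .
  have "g (c x) \<noteq> g x" using V_inj[OF g cx x(1)] x(2) by simp
  then show ?thesis using gx comm_apply[OF comm] by simp
qed

lemma caseB:
  assumes g: "g \<in> V_set r {0<..} UNIV" and c1: "Hm r c1" and c2: "Hm r c2"
    and comm1: "g \<circ> c1 = c1 \<circ> g" and comm2: "g \<circ> c2 = c2 \<circ> g"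
    and uv: "0 < u" "u < p" "p < v" "v < r"
    and S1: "\<forall>x\<in>{0..<r}. c1 x \<noteq> x \<longleftrightarrow> u < x \<and> x < p"
    and S2: "\<forall>x\<in>{0..<r}. c2 x \<noteq> x \<longleftrightarrow> p < x \<and> x < v"
  shows "\<not> lgap g p"
proof -
  have p0: "0 \<le> p" "p < r" using uv by auto
  have gp: "g p \<in> {0..<r}" using V_maps[OF g] p0 by auto
  have c2p: "c2 p = p" using S2 p0 by auto
  have c1p: "c1 p = p" using S1 p0 by auto
  have "c2 (g p) = g p" using comm_apply[OF comm2, of p] c2p by simp
  then have gpn: "\<not> (p < g p \<and> g p < v)" using S2 gp by auto
  obtain e s c where esc: "e > 0" "s > 0" "\<forall>y\<in>{p..<p+e}. g y = s*y+c" using V_right[OF g p0] by blast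
  have evR: "eventually (\<lambda>y. y \<in> {p<..<min (p+e) v}) (at_right p)"
    by (rule eventually_at_right_real) (use esc uv in auto)
  have "((\<lambda>y. s*y+c) \<longlongrightarrow> s*p+c) (at_right p)" by (intro tendsto_intros)
  moreover have "\<forall>\<^sub>F y in at_right p. s*y+c = g y" using evR by eventually_elim (use esc in auto)
  ultimately have "(g \<longlongrightarrow> s*p+c) (at_right p)" by (rule Lim_transform_eventually)
  moreover have gpe: "g p = s*p+c" using esc by auto
  ultimately have R: "(g \<longlongrightarrow> g p) (at_right p)" by simp
  have evR2: "eventually (\<lambda>y. p < g y \<and> g y < v \<and> g p < g y) (at_right p)"
    using evR
  proof eventually_elim
    case (elim y)
    then have "y \<in> {0..<r}" "c2 y \<noteq> y" using S2 uv by auto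
    then have "c2 (g y) \<noteq> g y" "g y \<in> {0..<r}" using g_supp[OF g c2 comm2] by auto
    then have "p < g y \<and> g y < v" using S2 by auto
    moreover have "g p < g y" using elim esc gpe by auto
    ultimately show ?case by auto
  qed
  have "p \<le> g p"
    by (rule tendsto_lowerbound[OF R]) (use evR2 in \<open>auto elim: eventually_mono\<close>)
  moreover have "g p < v"
  proof -
    obtain y where "p < g y \<and> g y < v \<and> g p < g y" using eventually_happens[OF evR2] by auto
    then show ?thesis by auto
  qed
  ultimately have gpp: "g p = p" using gpn by auto
  obtain L where L: "filterlim g (at_left L) (at_left p)" using V_leftlim[OF g, of p] uv by auto
  have Lt: "(g \<longlongrightarrow> L) (at_left p)" using L unfolding filterlim_at by simp
  have evL: "eventually (\<lambda>y. y \<in> {u<..<p}) (at_left p)" using eventually_at_left_real uv by blast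
  have evL2: "eventually (\<lambda>y. u < g y \<and> g y < p \<and> g y < L) (at_left p)"
    using eventually_conj[OF evL L[unfolded filterlim_at, THEN conjunct1]]
  proof eventually_elim
    case (elim y)
    then have "y \<in> {0..<r}" "c1 y \<noteq> y" using S1 uv by auto
    then have "c1 (g y) \<noteq> g y" "g y \<in> {0..<r}" using g_supp[OF g c1 comm1] by auto
    then have "u < g y \<and> g y < p" using S1 by auto
    then show ?case using elim by auto
  qed
  have Lp: "L \<le> p"
    by (rule tendsto_upperbound[OF Lt]) (use evL2 in \<open>auto elim: eventually_mono\<close>)
  have Lu: "u < L"
  proof -
    obtain y where "u < g y \<and> g y < p \<and> g y < L" using eventually_happens[OF evL2] by auto
    then show ?thesis by auto
  qed
  have "L = p"
  proof (rule ccontr)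
    assume "L \<noteq> p"
    then have Lp': "L < p" using Lp by auto
    have T1: "filterlim (\<lambda>y. g (c1 y)) (at_left L) (at_left p)"
    proof -
      have "filterlim c1 (at_left (c1 p)) (at_left p)" using Hm_left[OF c1, of p] uv by simp
      then have "filterlim c1 (at_left p) (at_left p)" using c1p by simp
      then show ?thesis by (rule filterlim_compose[OF L])
    qed
    have T2: "filterlim (\<lambda>y. c1 (g y)) (at_left (c1 L)) (at_left p)"
      by (rule filterlim_compose[OF Hm_left[OF c1] L]) (use Lu uv Lp' in auto)
    have T1': "((\<lambda>y. c1 (g y)) \<longlongrightarrow> L) (at_left p)" using T1 unfolding filterlim_at comm_apply[OF comm1] by simp
    have T2': "((\<lambda>y. c1 (g y)) \<longlongrightarrow> c1 L) (at_left p)" using T2 unfolding filterlim_at by simp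
    have "c1 L = L" using tendsto_unique[OF _ T2' T1'] by simp
    moreover have "L \<in> {0..<r}" using Lu Lp' uv by auto
    ultimately show False using S1 Lu Lp' by auto
  qed
  then show ?thesis unfolding lgap_def using Lt gpp by simp
qed




lemma sorted_bounds:
  fixes ts :: "real list"
  assumes "sorted_wrt (<) ts" "ts \<noteq> []" "t \<in> set ts"
  shows "hd ts \<le> t \<and> t \<le> last ts"
proof -
  obtain k where k: "k < length ts" "ts!k = t" using assms(3) by (auto simp: in_set_conv_nth)
  have h: "hd ts = ts!0" using assms(2) by (simp add: hd_conv_nth)
  have l: "last ts = ts!(length ts - 1)" using assms(2) by (simp add: last_conv_nth)
  have 1: "hd ts \<le> t"
  proof (cases "k = 0")
    case True then show ?thesis using h k by simp
  next
    case False then show ?thesis using sorted_wrt_nth_less[OF assms(1), of 0 k] h k by simp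
  qed
  have 2: "t \<le> last ts"
  proof (cases "k = length ts - 1")
    case True then show ?thesis using l k by simp
  next
    case False
    then have "k < length ts - 1" using k by auto
    then have "ts!k < ts!(length ts - 1)" using sorted_wrt_nth_less[OF assms(1), of k "length ts - 1"] k by auto
    then show ?thesis using l k by simp
  qed
  show ?thesis using 1 2 by simp
qed

lemma fun_inv_pt: "f \<circ> g = id \<Longrightarrow> f (g z) = z"
  by (metis comp_apply id_apply)

lemma V_inverse:
  assumes xV: "x \<in> V_set r {0<..} UNIV" and xH: "Hm r x" and xy: "x \<circ> y = id" "y \<circ> x = id"
  shows "y \<in> V_set r {0<..} UNIV"
proof -
  have yH: "Hm r y" using Hm_inv[OF xH xy] .
  have fy: "x (y u) = u" for u using fun_inv_pt[OF xy(1)] .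
  have yx: "y (x u) = u" for u using fun_inv_pt[OF xy(2)] .
  have r: "0 < r" using Hm_pos[OF xH] .
  have bij: "bij_betw y {0..<r} {0..<r}"
    unfolding bij_betw_def
  proof
    show "inj_on y {0..<r}" by (metis fy inj_onI)
    show "y ` {0..<r} = {0..<r}" using yH by (simp add: Hm_def)
  qed
  obtain ts where ts: "sorted_wrt (<) ts" "ts \<noteq> []" "hd ts = 0" "last ts = r"
      "\<forall>i. Suc i < length ts \<longrightarrow> (\<exists>s>0. \<exists>c. \<forall>t\<in>{ts ! i ..< ts ! Suc i}. x t = s * t + c)"
    using V_PL[OF xV] by blast
  have tsr: "t \<in> {0..r}" if "t \<in> set ts" for t using sorted_bounds[OF ts(1,2) that] ts(3,4) by auto
  have PL: "PL_map r {0<..} UNIV y"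
    unfolding PL_map_def
  proof (rule exI[of _ "map x ts"], intro conjI allI impI)
    show "sorted_wrt (<) (map x ts)" unfolding sorted_wrt_map
      by (rule sorted_wrt_mono_rel[OF _ ts(1)]) (use Hm_less[OF xH] tsr in blast)
    show "map x ts \<noteq> []" using ts(2) by simp
    show "hd (map x ts) = 0" using ts(2,3) Hm_0[OF xH] by (simp add: hd_map)
    show "last (map x ts) = r" using ts(2,4) Hm_r[OF xH] by (simp add: last_map)
    show "set (map x ts) \<subseteq> UNIV" by simp
    show "\<forall>t\<in>set (map x ts). t < r \<longrightarrow> y t \<in> UNIV" by simp
    fix i assume i: "Suc i < length (map x ts)"
    then have "Suc i < length ts" by simp
    then obtain s c where sc: "s > 0" "\<forall>t\<in>{ts ! i ..< ts ! Suc i}. x t = s * t + c" using ts(5) by blast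
    have ti: "ts!i \<in> {0..r}" "ts!Suc i \<in> {0..r}" using tsr i by auto
    have "\<forall>u\<in>{map x ts ! i..<map x ts ! Suc i}. y u = (1/s) * u + (- c / s)"
    proof
      fix u assume u: "u \<in> {map x ts ! i..<map x ts ! Suc i}"
      then have u': "x (ts!i) \<le> u" "u < x (ts!Suc i)" using i by auto
      have "x (ts!i) \<in> {0..r}" "x (ts!Suc i) \<in> {0..r}" using Hm_mapsc[OF xH] ti by auto
      then have ur: "u \<in> {0..r}" using u' by auto
      have yur: "y u \<in> {0..r}" using Hm_mapsc[OF yH ur] .
      have "ts!i \<le> y u" using Hm_le[OF xH ti(1) yur] u'(1) fy by simp
      moreover have "y u < ts!Suc i" using Hm_less[OF xH yur ti(2)] u'(2) fy by simp
      ultimately have "x (y u) = s * y u + c" using sc by auto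
      then have "u = s * y u + c" using fy by simp
      then show "y u = (1/s) * u + (- c / s)" using sc(1) by (simp add: field_simps)
    qed
    then show "\<exists>s\<in>{0<..}. \<exists>c. \<forall>t\<in>{map x ts ! i..<map x ts ! Suc i}. y t = s * t + c"
      using sc(1) by (intro bexI[of _ "1/s"] exI[of _ "- c / s"]) auto
  qed
  show ?thesis unfolding V_set_def using bij PL Hm_out[OF yH] by auto
qed

lemma Vmult: "x \<otimes>\<^bsub>Vgrp r L A\<^esub> y = y \<circ> x" by (simp add: Vgrp_def)
lemma Vone: "\<one>\<^bsub>Vgrp r L A\<^esub> = id" by (simp add: Vgrp_def)

lemma Vnatpow: "x [^]\<^bsub>Vgrp r L A\<^esub> (n::nat) = x ^^ n"
  by (induction n) (simp_all add: Vmult Vone)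

lemma Vinv:
  assumes "y \<in> V_set r L A" "x \<circ> y = id" "y \<circ> x = id"
  shows "inv\<^bsub>Vgrp r L A\<^esub> x = y"
  unfolding m_inv_def
proof (rule the_equality)
  show "y \<in> carrier (Vgrp r L A) \<and> x \<otimes>\<^bsub>Vgrp r L A\<^esub> y = \<one>\<^bsub>Vgrp r L A\<^esub> \<and> y \<otimes>\<^bsub>Vgrp r L A\<^esub> x = \<one>\<^bsub>Vgrp r L A\<^esub>"
    using assms by (simp add: Vmult Vone Vgrp_carrier)
  fix z assume "z \<in> carrier (Vgrp r L A) \<and> x \<otimes>\<^bsub>Vgrp r L A\<^esub> z = \<one>\<^bsub>Vgrp r L A\<^esub> \<and> z \<otimes>\<^bsub>Vgrp r L A\<^esub> x = \<one>\<^bsub>Vgrp r L A\<^esub>"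
  then have "z \<circ> x = id" "x \<circ> z = id" by (simp_all add: Vmult Vone)
  then show "z = y" using assms(2) by (metis comp_assoc comp_id id_comp)
qed

lemma funpow_inv: fixes f g :: "'a \<Rightarrow> 'a" assumes "f \<circ> g = id" shows "f ^^ n \<circ> g ^^ n = id"
proof -
  have fg: "f (g z) = z" for z using fun_inv_pt[OF assms] .
  have "(f ^^ n) ((g ^^ n) z) = z" for z
  proof (induction n arbitrary: z)
    case 0 show ?case by auto
  next
    case (Suc n)
    have e1: "f ^^ Suc n = f ^^ n \<circ> f" by (rule funpow_Suc_right)
    have e2: "g ^^ Suc n = g \<circ> g ^^ n" by simp
    have "(f ^^ Suc n) ((g ^^ Suc n) z) = (f ^^ n) (f (g ((g ^^ n) z)))"
      by (simp only: e1 e2 comp_apply)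
    then show ?case using Suc fg by simp
  qed
  then show ?thesis by (simp add: fun_eq_iff)
qed

lemma comm_funpow_inv: fixes f g :: "'a \<Rightarrow> 'a" assumes "f \<circ> g = id" "g \<circ> f = id" shows "f \<circ> g ^^ n = g ^^ n \<circ> f"
proof (cases n)
  case 0 then show ?thesis by simp
next
  case (Suc m)
  have fg: "f (g z) = z" for z using fun_inv_pt[OF assms(1)] .
  have gf: "g (f z) = z" for z using fun_inv_pt[OF assms(2)] .
  have "f ((g ^^ Suc m) z) = (g ^^ Suc m) (f z)" for z
  proof -
    have "f ((g ^^ Suc m) z) = (g ^^ m) z" using fg by simp
    moreover have "(g ^^ Suc m) (f z) = (g ^^ m) z" by (simp only: funpow_Suc_right comp_apply gf)
    ultimately show ?thesis by simp
  qed
  then show ?thesis using Suc by (simp add: fun_eq_iff)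
qed

definition Ez :: "(real \<Rightarrow> real) \<Rightarrow> (real \<Rightarrow> real) \<Rightarrow> int \<Rightarrow> real \<Rightarrow> real" where
  "Ez a ai k = (if k < 0 then ai ^^ nat (-k) else a ^^ nat k)"

lemma Ez_succ: assumes "a \<circ> ai = id" shows "Ez a ai (k+1) = a \<circ> Ez a ai k"
proof (cases "k < 0")
  case False
  then have "nat (k+1) = Suc (nat k)" by simp
  then show ?thesis using False by (simp add: Ez_def)
next
  case True
  define j where "j = nat (- (k+1))"
  have nk: "nat (-k) = Suc j" using True unfolding j_def by simp
  have e1: "Ez a ai (k+1) = ai ^^ j"
    using True unfolding Ez_def j_def by (cases "k + 1 < 0") auto
  have "a \<circ> ai ^^ Suc j = ai ^^ j" using fun_inv_pt[OF assms] by (simp add: fun_eq_iff)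
  then show ?thesis using e1 True nk by (simp add: Ez_def)
qed

lemma Ez_inv: assumes "a \<circ> ai = id" "ai \<circ> a = id" shows "Ez a ai (-k) \<circ> Ez a ai k = id"
proof -
  consider "k < 0" | "k = 0" | "k > 0" by linarith
  then show ?thesis
  proof cases
    case 1 then show ?thesis using funpow_inv[OF assms(1)] by (simp add: Ez_def)
  next
    case 2 then show ?thesis by (simp add: Ez_def)
  next
    case 3 then show ?thesis using funpow_inv[OF assms(2)] by (simp add: Ez_def)
  qed
qed

lemma Ez_comm: assumes "a \<circ> ai = id" "ai \<circ> a = id" shows "a \<circ> Ez a ai k = Ez a ai k \<circ> a"
proof (cases "k < 0")
  case True then show ?thesis using comm_funpow_inv[OF assms] by (simp add: Ez_def)
next
  case False then show ?thesis by (simp add: Ez_def fun_eq_iff funpow_swap1)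
qed

lemma Ez_Hm: "Hm r a \<Longrightarrow> Hm r ai \<Longrightarrow> Hm r (Ez a ai k)"
  by (simp add: Ez_def Hm_funpow)

lemma Hm_has_inv: assumes "Hm r a" shows "\<exists>ai. a \<circ> ai = id \<and> ai \<circ> a = id"
proof -
  have inj: "inj_on a {0..<r}" using assms unfolding Hm_def
    by (meson atLeastLessThan_subseteq_atLeastAtMost_iff order_refl strict_mono_on_imp_inj_on inj_on_subset)
  have im: "a ` {0..<r} = {0..<r}" using assms by (simp add: Hm_def)
  define ai where "ai z = (if z \<in> {0..<r} then the_inv_into {0..<r} a z else z)" for z
  have 1: "a (ai z) = z" for z
  proof (cases "z \<in> {0..<r}")
    case True
    then have "ai z = the_inv_into {0..<r} a z" unfolding ai_def by simp
    then show ?thesis using f_the_inv_into_f[OF inj, of z] im True by simp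
  next
    case False
    have "ai z = z" unfolding ai_def by (rule if_not_P[OF False])
    then show ?thesis using Hm_out[OF assms False] by simp
  qed
  have 2: "ai (a z) = z" for z
  proof (cases "z \<in> {0..<r}")
    case True
    then have "a z \<in> {0..<r}" using Hm_maps[OF assms] by blast
    then show ?thesis using the_inv_into_f_f[OF inj True] unfolding ai_def by simp
  next
    case False
    have "a z = z" using Hm_out[OF assms False] .
    moreover have "ai z = z" unfolding ai_def by (rule if_not_P[OF False])
    ultimately show ?thesis by simp
  qed
  show ?thesis using 1 2 by (intro exI[of _ ai]) (simp add: fun_eq_iff)
qed

lemma funpow_subgroup:
  assumes "subgroup G (Vgrp r L A)" "a \<in> G" shows "a ^^ n \<in> G"
proof (induction n)
  case 0
  have "\<one>\<^bsub>Vgrp r L A\<^esub> \<in> G" using subgroup.one_closed[OF assms(1)] .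
  then show ?case by (simp add: Vone id_def)
next
  case (Suc n)
  have "a ^^ n \<otimes>\<^bsub>Vgrp r L A\<^esub> a \<in> G" using subgroup.m_closed[OF assms(1) Suc assms(2)] .
  then have "a \<circ> a ^^ n \<in> G" by (simp only: Vmult)
  then show ?case by (simp only: funpow.simps)
qed

lemma Vpow_int:
  assumes G: "subgroup G (Vgrp r {0<..} UNIV)" and aG: "a \<in> G" and aH: "Hm r a"
    and aa: "a \<circ> ai = id" "ai \<circ> a = id"
  shows "a [^]\<^bsub>Vgrp r {0<..} UNIV\<^esub> (k::int) = Ez a ai k"
proof -
  have GV: "G \<subseteq> V_set r {0<..} UNIV" using subgroup.subset[OF G] by (simp add: Vgrp_carrier)
  have inv: "inv\<^bsub>Vgrp r {0<..} UNIV\<^esub> (a ^^ n) = ai ^^ n" for n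
  proof (rule Vinv)
    show "a ^^ n \<circ> ai ^^ n = id" using funpow_inv[OF aa(1)] .
    show "ai ^^ n \<circ> a ^^ n = id" using funpow_inv[OF aa(2)] .
    show "ai ^^ n \<in> V_set r {0<..} UNIV"
      by (rule V_inverse[of "a ^^ n"]) (use funpow_subgroup[OF G aG] GV Hm_funpow[OF aH] funpow_inv[OF aa(1)] funpow_inv[OF aa(2)] in auto)
  qed
  show ?thesis unfolding int_pow_def2 Ez_def Vnatpow inv by simp
qed




lemma part2:
  fixes r :: real and \<Lambda> A :: "real set" and a b :: "real \<Rightarrow> real"
    and \<alpha>\<^sub>0 :: real and G :: "(real \<Rightarrow> real) set"
  assumes params: "std_params r \<Lambda> A"
    and a: "a \<in> F_up r \<Lambda> A" "supp r a = {0<..<r}"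
    and alpha0: "\<alpha>\<^sub>0 \<in> {0<..<r}" "\<alpha>\<^sub>0 \<in> A"
    and b: "b \<in> F_up r \<Lambda> A"
       "supp r b = {\<alpha>\<^sub>0 <..< ((a [^]\<^bsub>Vgrp r {0<..} UNIV\<^esub> (1::int)) \<alpha>\<^sub>0)}"
    and G: "subgroup G (Vgrp r {0<..} UNIV)"
       "G \<inter> F_set r {0<..} UNIV = F_set r \<Lambda> A"
  shows "centr G {(a [^]\<^bsub>Vgrp r {0<..} UNIV\<^esub> (-k)) \<otimes>\<^bsub>Vgrp r {0<..} UNIV\<^esub> b
                 \<otimes>\<^bsub>Vgrp r {0<..} UNIV\<^esub> (a [^]\<^bsub>Vgrp r {0<..} UNIV\<^esub> k) | k :: int. True}
      = centr (F_set r \<Lambda> A)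
          {(a [^]\<^bsub>Vgrp r {0<..} UNIV\<^esub> (-k)) \<otimes>\<^bsub>Vgrp r {0<..} UNIV\<^esub> b
                 \<otimes>\<^bsub>Vgrp r {0<..} UNIV\<^esub> (a [^]\<^bsub>Vgrp r {0<..} UNIV\<^esub> k) | k :: int. True}"
proof -
  have r: "0 < r" using params_r[OF params] .
  have FG: "F_set r \<Lambda> A \<subseteq> G" using G(2) by blast
  have GV: "G \<subseteq> V_set r {0<..} UNIV" using subgroup.subset[OF G(1)] by (simp add: Vgrp_carrier)
  have aF: "a \<in> F_set r \<Lambda> A" and age: "\<forall>y\<in>{0..<r}. a y \<ge> y" using a(1) by (auto simp: F_up_def)
  have aG: "a \<in> G" using aF FG by blast
  have acont: "continuous_on {0..<r} a" using aF by (simp add: F_set_def)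
  have "0 \<notin> supp r a" using a(2) by simp
  then have a0: "a 0 = 0" using r unfolding supp_def by simp
  have aH: "Hm r a" using F_Hm[OF aF a0 r] .
  have aup: "\<forall>x\<in>{0<..<r}. a x > x"
  proof
    fix x assume x: "x \<in> {0<..<r}"
    then have "x \<in> supp r a" using a(2) by simp
    then have "a x \<noteq> x" unfolding supp_def by simp
    moreover have "x \<le> a x" using age x by auto
    ultimately show "a x > x" by simp
  qed
  obtain ai where aa: "a \<circ> ai = id" "ai \<circ> a = id" using Hm_has_inv[OF aH] by blast
  have aiH: "Hm r ai" using Hm_inv[OF aH aa] .
  define E where "E = Ez a ai"
  have pw: "\<And>k. a [^]\<^bsub>Vgrp r {0<..} UNIV\<^esub> (k::int) = E k"
    unfolding E_def by (rule Vpow_int[OF G(1) aG aH aa])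
  have E1: "E 1 = a" unfolding E_def Ez_def by simp
  have EH: "Hm r (E k)" for k unfolding E_def using Ez_Hm[OF aH aiH] .
  have Einv: "E (-k) \<circ> E k = id" for k unfolding E_def using Ez_inv[OF aa] .
  have Einv2: "E k \<circ> E (-k) = id" for k using Einv[of "-k"] by simp
  have Esucc: "E (k+1) = a \<circ> E k" for k unfolding E_def using Ez_succ[OF aa(1)] .
  have Ecomm: "a \<circ> E k = E k \<circ> a" for k unfolding E_def using Ez_comm[OF aa] .
  have bF: "b \<in> F_set r \<Lambda> A" and bge: "\<forall>y\<in>{0..<r}. b y \<ge> y" using b(1) by (auto simp: F_up_def)
  have suppb: "supp r b = {\<alpha>\<^sub>0 <..< a \<alpha>\<^sub>0}" using b(2) pw[of 1] E1 by simp
  have "0 \<notin> supp r b" using suppb alpha0 by simp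
  then have b0: "b 0 = 0" using r unfolding supp_def by simp
  have bH: "Hm r b" using F_Hm[OF bF b0 r] .
  have bS: "b y \<noteq> y \<longleftrightarrow> \<alpha>\<^sub>0 < y \<and> y < a \<alpha>\<^sub>0" if "y \<in> {0..<r}" for y
    using suppb that unfolding supp_def by (auto simp: set_eq_iff)
  define C where "C k = E k \<circ> (b \<circ> E (-k))" for k
  have Sset: "{(a [^]\<^bsub>Vgrp r {0<..} UNIV\<^esub> (-k)) \<otimes>\<^bsub>Vgrp r {0<..} UNIV\<^esub> b
                 \<otimes>\<^bsub>Vgrp r {0<..} UNIV\<^esub> (a [^]\<^bsub>Vgrp r {0<..} UNIV\<^esub> k) | k :: int. True}
        = {C k | k. True}"
    unfolding C_def pw Vmult by simp
  have CH: "Hm r (C k)" for k unfolding C_def using Hm_comp[OF EH Hm_comp[OF bH EH]] .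
  define \<alpha> where "\<alpha> k = E k \<alpha>\<^sub>0" for k
  have al_succ: "\<alpha> (k+1) = a (\<alpha> k)" for k unfolding \<alpha>_def using Esucc by simp
  have al_in: "\<alpha> k \<in> {0<..<r}" for k
  proof -
    have "\<alpha> k \<in> {0..<r}" unfolding \<alpha>_def using Hm_maps[OF EH] alpha0 by auto
    moreover have "\<alpha> k \<noteq> E k 0" unfolding \<alpha>_def using Hm_eq[OF EH, of \<alpha>\<^sub>0 0] alpha0 by auto
    ultimately show ?thesis using Hm_0[OF EH] by auto
  qed
  have Csupp: "C k x \<noteq> x \<longleftrightarrow> \<alpha> k < x \<and> x < \<alpha> (k+1)" and Cup: "C k x \<noteq> x \<longrightarrow> C k x > x"
    if x: "x \<in> {0..<r}" for k x
  proof -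
    define y where "y = E (-k) x"
    have y: "y \<in> {0..<r}" unfolding y_def using Hm_maps[OF EH[of "-k"] x] .
    have Ey: "E k y = x" unfolding y_def using fun_inv_pt[OF Einv2] .
    have Cx: "C k x = E k (b y)" unfolding C_def y_def by simp
    have by': "b y \<in> {0..r}" using Hm_maps[OF bH y] by auto
    have a0r: "\<alpha>\<^sub>0 \<in> {0..r}" "a \<alpha>\<^sub>0 \<in> {0..r}" using alpha0 Hm_mapsc[OF aH, of \<alpha>\<^sub>0] by auto
    have yc: "y \<in> {0..r}" using y by auto
    have e1: "C k x \<noteq> x \<longleftrightarrow> b y \<noteq> y" using Hm_eq[OF EH[of k] by' yc] Cx Ey by simp
    have e2: "E k (a \<alpha>\<^sub>0) = \<alpha> (k+1)" unfolding \<alpha>_def using Esucc[of k] Ecomm[of k] by (metis comp_apply)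
    have "b y \<noteq> y \<longleftrightarrow> \<alpha> k < x \<and> x < \<alpha> (k+1)"
      using bS[OF y] Hm_less[OF EH[of k] a0r(1) yc] Hm_less[OF EH[of k] yc a0r(2)] e2 Ey unfolding \<alpha>_def by simp
    then show "C k x \<noteq> x \<longleftrightarrow> \<alpha> k < x \<and> x < \<alpha> (k+1)" using e1 by simp
    show "C k x \<noteq> x \<longrightarrow> C k x > x"
    proof
      assume "C k x \<noteq> x"
      then have "b y \<noteq> y" using e1 by simp
      moreover have "y \<le> b y" using bge y by auto
      ultimately have "b y > y" by simp
      then show "C k x > x" using Hm_less[OF EH[of k] yc by'] Cx Ey by simp
    qed
  qed
  show ?thesis unfolding Sset
  proof
    show "centr (F_set r \<Lambda> A) {C k |k. True} \<subseteq> centr G {C k |k. True}" using FG unfolding centr_def by auto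
    show "centr G {C k |k. True} \<subseteq> centr (F_set r \<Lambda> A) {C k |k. True}"
    proof
      fix g assume g: "g \<in> centr G {C k |k. True}"
      then have gG: "g \<in> G" and comm: "\<And>k. g \<circ> C k = C k \<circ> g" unfolding centr_def by auto
      have gV: "g \<in> V_set r {0<..} UNIV" using gG GV by auto
      have "\<forall>p\<in>{0<..<r}. \<not> lgap g p"
      proof
        fix p assume p: "p \<in> {0<..<r}"
        obtain k where k: "\<alpha> k \<le> p" "p < \<alpha> (k+1)"
          using cover_alpha[OF acont aup, of \<alpha> p] al_in al_succ p by auto
        show "\<not> lgap g p"
        proof (cases "p = \<alpha> k")
          case False
          then have pk: "\<alpha> k < p" using k by auto
          show ?thesis
          proof (rule caseA[OF gV CH comm])
            show "\<forall>x\<in>{0<..<r}. C k x \<noteq> x \<longrightarrow> x < C k x" using Cup by auto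
            show "0 < p" "p < r" using p by auto
            show "C k p \<noteq> p" using Csupp[of p k] p pk k by auto
          qed
        next
          case True
          have km: "k - 1 + 1 = k" by simp
          have u: "\<alpha> (k-1) < \<alpha> k" using al_succ[of "k-1"] aup al_in[of "k-1"] km by auto
          show ?thesis
          proof (rule caseB[OF gV CH CH comm comm])
            show "0 < \<alpha> (k-1)" using al_in by auto
            show "\<alpha> (k-1) < p" using u True by simp
            show "p < \<alpha> (k+1)" using k by simp
            show "\<alpha> (k+1) < r" using al_in by auto
            show "\<forall>x\<in>{0..<r}. C (k-1) x \<noteq> x \<longleftrightarrow> \<alpha> (k-1) < x \<and> x < p"
              using Csupp[of _ "k-1"] km True by auto
            show "\<forall>x\<in>{0..<r}. C k x \<noteq> x \<longleftrightarrow> p < x \<and> x < \<alpha> (k+1)"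
              using Csupp[of _ k] True by auto
          qed
        qed
      qed
      then have "continuous_on {0..<r} g" using V_cont[OF gV] by simp
      then have "g \<in> F_set r {0<..} UNIV" using gV by (simp add: F_set_def)
      then have "g \<in> F_set r \<Lambda> A" using G(2) gG by blast
      then show "g \<in> centr (F_set r \<Lambda> A) {C k |k. True}" using g unfolding centr_def by auto
    qed
  qed
qed


theorem lemma4p7:
  fixes r :: real and \<Lambda> A :: "real set" and a b :: "real \<Rightarrow> real"
    and \<alpha>\<^sub>0 :: real and G :: "(real \<Rightarrow> real) set"
  assumes params: "std_params r \<Lambda> A"
    and a: "a \<in> F_up r \<Lambda> A" "supp r a = {0<..<r}"
    and alpha0: "\<alpha>\<^sub>0 \<in> {0<..<r}" "\<alpha>\<^sub>0 \<in> A"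
    and b: "b \<in> F_up r \<Lambda> A"
       "supp r b = {\<alpha>\<^sub>0 <..< ((a [^]\<^bsub>Vgrp r {0<..} UNIV\<^esub> (1::int)) \<alpha>\<^sub>0)}"
    and G: "subgroup G (Vgrp r {0<..} UNIV)"
       "G \<inter> F_set r {0<..} UNIV = F_set r \<Lambda> A"
  shows "centr G {a} = centr (F_set r \<Lambda> A) {a}
    \<and> centr G {(a [^]\<^bsub>Vgrp r {0<..} UNIV\<^esub> (-k)) \<otimes>\<^bsub>Vgrp r {0<..} UNIV\<^esub> b
                 \<otimes>\<^bsub>Vgrp r {0<..} UNIV\<^esub> (a [^]\<^bsub>Vgrp r {0<..} UNIV\<^esub> k) | k :: int. True}
      = centr (F_set r \<Lambda> A)
          {(a [^]\<^bsub>Vgrp r {0<..} UNIV\<^esub> (-k)) \<otimes>\<^bsub>Vgrp r {0<..} UNIV\<^esub> b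
                 \<otimes>\<^bsub>Vgrp r {0<..} UNIV\<^esub> (a [^]\<^bsub>Vgrp r {0<..} UNIV\<^esub> k) | k :: int. True}"
  using centr_a[OF params a G] part2[OF params a alpha0 b G] by blast

end
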